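(* Let $n$ be a positive integer and $x=(x_1,\ldots,x_n)\in C^n$. Let $|x|$ denote the number of indices $i$ such that $x_i$ is rational. Then the group of germs $G_{(nV,x)}$ is isomorphic to $\mathbb{Z}^{|x|}$.
   Context: Identify the Cantor set $C$ with $\{0,1\}^{\mathbb N}$, the set of infinite binary strings with the product topology. A point $s\in C$ is rational if it is eventually periodic, i.e. $s=Pww w\cdots$ for some finite binary string $P$ and some nonempty finite binary string $w$. For finite binary strings $P_0,\ldots,P_{n-1}$, the $n$-rectangle $(P_0,\ldots,P_{n-1})$ is $\{(P_0z_0,\ldots,P_{n-1}z_{n-1}): z_i\in C\}\subseteq C^n$ (concatenation of strings). For $n$-rectangles $D=(P_0,\ldots,P_{n-1})$, $R=(Q_0,\ldots,Q_{n-1})$, the $n$-rectangle map $\tau_{(D,R)}:D\to R$ sends $(P_0z_0,\ldots,P_{n-1}z_{n-1})\mapsto(Q_0z_0,\ldots,Q_{n-1}z_{n-1})$. A pattern is a partition of $C^n$ into finitely many $n$-rectangles. The group $nV$ consists of all homeomorphisms $f:C^n\to C^n$ for which there are a domain pattern $\{D_1,\ldots,D_k\}$ and a range pattern $\{R_1,\ldots,R_k\}$ with $f$ equal to the union of the maps $\tau_{(D_i,R_i)}$. For a group $K$ of homeomorphisms of a space $X$ and $x\in X$: $Fix_{(K,x)}=\{h\in K: h(x)=x\}$; $f\sim_x g$ if $f$ and $g$ agree on some neighborhood of $x$; $G_{(K,x)}$ is the set of $\sim_x$-classes $[h]_x$, a group under $[f]_x[g]_x=[fg]_x$. *)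

theory Defs
  imports "HOL-Analysis.Analysis" "HOL-Algebra.Product_Groups"
begin

text \<open>The Cantor set C = infinite binary strings, with the product topology
  of discrete two-point spaces; C^n is modelled as 'n \<Rightarrow> C for a finite index type 'n.\<close>

type_synonym cantor = "nat \<Rightarrow> bool"

definition cantor_top :: "cantor topology" where
  "cantor_top = product_topology (\<lambda>_. discrete_topology UNIV) UNIV"

definition cantor_pow_top :: "('n \<Rightarrow> cantor) topology" where
  "cantor_pow_top = product_topology (\<lambda>_. cantor_top) UNIV"

definition prepend :: "bool list \<Rightarrow> cantor \<Rightarrow> cantor" where
  "prepend P z = (\<lambda>k. if k < length P then P ! k else z (k - length P))"

definition cycle_str :: "bool list \<Rightarrow> cantor" where
  "cycle_str w = (\<lambda>k. w ! (k mod length w))"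

definition rational_pt :: "cantor \<Rightarrow> bool" where
  "rational_pt s \<longleftrightarrow> (\<exists>P w. w \<noteq> [] \<and> s = prepend P (cycle_str w))"

definition rect :: "('n \<Rightarrow> bool list) \<Rightarrow> ('n \<Rightarrow> cantor) set" where
  "rect D = {y. \<exists>z. y = (\<lambda>i. prepend (D i) (z i))}"

definition rect_map :: "('n \<Rightarrow> bool list) \<Rightarrow> ('n \<Rightarrow> bool list) \<Rightarrow> ('n \<Rightarrow> cantor) \<Rightarrow> ('n \<Rightarrow> cantor)" where
  "rect_map D R y = (\<lambda>i. prepend (R i) (\<lambda>k. y i (k + length (D i))))"

definition is_pattern :: "nat \<Rightarrow> (nat \<Rightarrow> ('n \<Rightarrow> bool list)) \<Rightarrow> bool" where
  "is_pattern k D \<longleftrightarrow>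
     (\<Union>j<k. rect (D j)) = UNIV \<and>
     (\<forall>j<k. \<forall>j'<k. j \<noteq> j' \<longrightarrow> rect (D j) \<inter> rect (D j') = {})"

definition nV :: "(('n \<Rightarrow> cantor) \<Rightarrow> ('n \<Rightarrow> cantor)) set" where
  "nV = {f. homeomorphic_map cantor_pow_top cantor_pow_top f \<and>
            (\<exists>k D R. is_pattern k D \<and> is_pattern k R \<and>
               (\<forall>j<k. \<forall>y\<in>rect (D j). f y = rect_map (D j) (R j) y))}"

definition Fix :: "('a \<Rightarrow> 'a) set \<Rightarrow> 'a \<Rightarrow> ('a \<Rightarrow> 'a) set" where
  "Fix K x = {h \<in> K. h x = x}"

definition germ_equiv :: "'a topology \<Rightarrow> 'a \<Rightarrow> ('a \<Rightarrow> 'a) \<Rightarrow> ('a \<Rightarrow> 'a) \<Rightarrow> bool" where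
  "germ_equiv X x f g \<longleftrightarrow> (\<exists>U. openin X U \<and> x \<in> U \<and> (\<forall>y\<in>U. f y = g y))"

definition germ :: "'a topology \<Rightarrow> ('a \<Rightarrow> 'a) set \<Rightarrow> 'a \<Rightarrow> ('a \<Rightarrow> 'a) \<Rightarrow> ('a \<Rightarrow> 'a) set" where
  "germ X K x h = {g \<in> Fix K x. germ_equiv X x g h}"

definition germ_group :: "'a topology \<Rightarrow> ('a \<Rightarrow> 'a) set \<Rightarrow> 'a \<Rightarrow> (('a \<Rightarrow> 'a) set) monoid" where
  "germ_group X K x =
     \<lparr>carrier = germ X K x ` Fix K x,
      monoid.mult = (\<lambda>A B. germ X K x ((SOME f. f \<in> A) \<circ> (SOME g. g \<in> B))),
      one = germ X K x id\<rparr>"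

end

theory Submission
  imports Defs
begin


definition bcone :: "bool list \<Rightarrow> cantor set" where
  "bcone Q = {y. \<forall>k<length Q. y k = Q ! k}"

definition cyl1 :: "nat \<Rightarrow> cantor \<Rightarrow> cantor set" where
  "cyl1 N s = {y. \<forall>k<N. y k = s k}"

definition cyl :: "nat \<Rightarrow> ('n \<Rightarrow> cantor) \<Rightarrow> ('n \<Rightarrow> cantor) set" where
  "cyl N x = {y. \<forall>i k. k < N \<longrightarrow> y i k = x i k}"

lemma topspace_cantor[simp]: "topspace cantor_top = UNIV"
  by (simp add: cantor_top_def)

lemma topspace_cantor_pow[simp]: "topspace cantor_pow_top = UNIV"
  by (simp add: cantor_pow_top_def)

lemma open_cyl1: "openin cantor_top (cyl1 N s)"
  unfolding cantor_top_def openin_product_topology_alt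
proof (intro ballI)
  fix y assume y: "y \<in> cyl1 N s"
  define U where "U = (\<lambda>k::nat. if k < N then {s k} else UNIV)"
  have "{i \<in> UNIV. U i \<noteq> topspace (discrete_topology UNIV)} \<subseteq> {..<N}"
    by (auto simp: U_def)
  hence "finite {i \<in> UNIV. U i \<noteq> topspace (discrete_topology UNIV)}"
    using finite_subset by blast
  moreover have "y \<in> Pi\<^sub>E UNIV U" using y by (auto simp: U_def cyl1_def)
  moreover have "Pi\<^sub>E UNIV U \<subseteq> cyl1 N s"
  proof (rule subsetI)
    fix z assume z: "z \<in> Pi\<^sub>E UNIV U"
    show "z \<in> cyl1 N s" unfolding cyl1_def
    proof (intro CollectI allI impI)
      fix k assume "k < N"
      have "z k \<in> U k" using z by auto
      then show "z k = s k" using \<open>k < N\<close> by (simp add: U_def)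
    qed
  qed
  ultimately show "\<exists>U. finite {i \<in> UNIV. U i \<noteq> topspace (discrete_topology UNIV)} \<and>
             (\<forall>i\<in>UNIV. openin (discrete_topology UNIV) (U i)) \<and> y \<in> Pi\<^sub>E UNIV U \<and> Pi\<^sub>E UNIV U \<subseteq> cyl1 N s"
    by (intro exI[of _ U]) simp
qed

lemma cyl1_in_open:
  assumes "openin cantor_top S" "s \<in> S" shows "\<exists>N. cyl1 N s \<subseteq> S"
proof -
  obtain U where U: "finite {i \<in> UNIV. U i \<noteq> topspace (discrete_topology (UNIV::bool set))}"
    "s \<in> Pi\<^sub>E UNIV U" "Pi\<^sub>E UNIV U \<subseteq> S"
    using assms unfolding cantor_top_def openin_product_topology_alt by blast
  have "finite {i. U i \<noteq> UNIV}" using U(1) by simp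
  then obtain N where N: "{i. U i \<noteq> UNIV} \<subseteq> {..<N}"
    using finite_nat_bounded by blast
  have "cyl1 N s \<subseteq> Pi\<^sub>E UNIV U"
  proof
    fix y assume y: "y \<in> cyl1 N s"
    have "y k \<in> U k" for k
    proof (cases "U k = UNIV")
      case False then have "k < N" using N by auto
      then show ?thesis using y U(2) by (auto simp: cyl1_def)
    qed simp
    then show "y \<in> Pi\<^sub>E UNIV U" by auto
  qed
  then show ?thesis using U(3) by blast
qed

lemma open_cyl: "openin cantor_pow_top (cyl N (x::'n::finite \<Rightarrow> cantor))"
  unfolding cantor_pow_top_def openin_product_topology_alt
proof (intro ballI)
  fix y assume y: "y \<in> cyl N x"
  define U where "U = (\<lambda>i. cyl1 N (x i))"
  have "y \<in> Pi\<^sub>E UNIV U" using y by (auto simp: U_def cyl1_def cyl_def)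
  moreover have "Pi\<^sub>E UNIV U \<subseteq> cyl N x" by (auto simp: U_def cyl1_def cyl_def PiE_iff)
  moreover have "\<forall>i\<in>UNIV. openin cantor_top (U i)" by (simp add: U_def open_cyl1)
  ultimately show "\<exists>U. finite {i \<in> UNIV. U i \<noteq> topspace cantor_top} \<and>
             (\<forall>i\<in>UNIV. openin cantor_top (U i)) \<and> y \<in> Pi\<^sub>E UNIV U \<and> Pi\<^sub>E UNIV U \<subseteq> cyl N x"
    by (intro exI[of _ U]) simp
qed

lemma cyl_in_open:
  assumes "openin cantor_pow_top S" "(x::'n::finite \<Rightarrow> cantor) \<in> S" shows "\<exists>N. cyl N x \<subseteq> S"
proof -
  have "\<exists>U. finite {i \<in> UNIV. U i \<noteq> topspace cantor_top} \<and>
                 (\<forall>i \<in> UNIV. openin cantor_top (U i)) \<and> x \<in> Pi\<^sub>E UNIV U \<and> Pi\<^sub>E UNIV U \<subseteq> S"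
    using assms unfolding cantor_pow_top_def openin_product_topology_alt by (rule bspec)
  then obtain U where U: "\<forall>i. openin cantor_top (U i)"
    "x \<in> Pi\<^sub>E UNIV U" "Pi\<^sub>E UNIV U \<subseteq> S"
    by blast
  have "\<forall>i. \<exists>N. cyl1 N (x i) \<subseteq> U i"
  proof
    fix i
    have "x i \<in> U i" using U(2) by (simp add: PiE_iff)
    then show "\<exists>N. cyl1 N (x i) \<subseteq> U i" using cyl1_in_open U(1) by blast
  qed
  then obtain NN where NN: "\<And>i. cyl1 (NN i) (x i) \<subseteq> U i" by metis
  define N where "N = Max (range NN)"
  have le: "NN i \<le> N" for i unfolding N_def by (rule Max_ge) auto
  have "cyl N x \<subseteq> Pi\<^sub>E UNIV U"
  proof
    fix y assume y: "y \<in> cyl N x"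
    have "y i \<in> cyl1 (NN i) (x i)" for i unfolding cyl1_def
    proof (intro CollectI allI impI)
      fix k assume "k < NN i"
      then show "y i k = x i k" using y le[of i] unfolding cyl_def by simp
    qed
    then have "y i \<in> U i" for i using NN by blast
    then show "y \<in> Pi\<^sub>E UNIV U" by (simp add: PiE_iff)
  qed
  then show ?thesis using U(3) by blast
qed

lemma cont_cantor:
  assumes "\<And>k. \<exists>N. \<forall>y y'. (\<forall>j<N. y j = y' j) \<longrightarrow> g y k = g y' k"
  shows "continuous_map cantor_top cantor_top g"
  unfolding cantor_top_def continuous_map_componentwise_UNIV
proof
  fix k
  obtain N where N: "\<forall>y y'. (\<forall>j<N. y j = y' j) \<longrightarrow> g y k = g y' k" using assms by blast
  show "continuous_map (product_topology (\<lambda>_. discrete_topology UNIV) UNIV) (discrete_topology UNIV) (\<lambda>x. g x k)"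
    unfolding continuous_map_def
  proof (intro conjI allI impI)
    fix V :: "bool set"
    have "openin cantor_top {x. g x k \<in> V}"
    proof (subst openin_subopen, intro ballI)
      fix y assume y: "y \<in> {x. g x k \<in> V}"
      have "cyl1 N y \<subseteq> {x. g x k \<in> V}"
      proof
        fix z assume "z \<in> cyl1 N y"
        hence "\<forall>j<N. z j = y j" by (simp add: cyl1_def)
        hence "g z k = g y k" using N by blast
        thus "z \<in> {x. g x k \<in> V}" using y by simp
      qed
      moreover have "y \<in> cyl1 N y" by (simp add: cyl1_def)
      ultimately show "\<exists>T. openin cantor_top T \<and> y \<in> T \<and> T \<subseteq> {x. g x k \<in> V}"
        using open_cyl1 by blast
    qed
    then show "openin (product_topology (\<lambda>_. discrete_topology UNIV) UNIV)
          {x \<in> topspace (product_topology (\<lambda>_. discrete_topology UNIV) UNIV). g x k \<in> V}"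
      by (simp add: cantor_top_def)
  qed auto
qed



definition Mk :: "('n \<Rightarrow> cantor) \<Rightarrow> ('n \<Rightarrow> nat) \<Rightarrow> ('n \<Rightarrow> int) \<Rightarrow> ('n \<Rightarrow> cantor) \<Rightarrow> ('n \<Rightarrow> cantor)" where
  "Mk x K d y = (\<lambda>i k. if k < K i then x i k else y i (nat (int k + d i)))"

definition form :: "('n \<Rightarrow> cantor) \<Rightarrow> (('n \<Rightarrow> cantor) \<Rightarrow> ('n \<Rightarrow> cantor)) \<Rightarrow> ('n \<Rightarrow> int) \<Rightarrow> bool" where
  "form x f d \<longleftrightarrow> (\<exists>K N. (\<forall>i. 0 \<le> int (K i) + d i) \<and>
      (\<forall>i k. K i \<le> k \<longrightarrow> x i (nat (int k + d i)) = x i k) \<and>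
      (\<forall>y\<in>cyl N x. f y = Mk x K d y))"

lemma Mk_enlarge:
  assumes per: "\<And>i k. K i \<le> k \<Longrightarrow> x i (nat (int k + d i)) = x i k"
    and nn: "\<And>i. 0 \<le> int (K i) + d i"
    and le: "\<And>i. K i \<le> K' i" and y: "y \<in> cyl N x" and b: "\<And>i. int (K' i) + d i \<le> int N"
  shows "Mk x K d y = Mk x K' d y"
proof (intro ext)
  fix i k
  show "Mk x K d y i k = Mk x K' d y i k"
  proof (cases "k < K i")
    case True then show ?thesis using le[of i] by (auto simp: Mk_def)
  next
    case False
    show ?thesis
    proof (cases "k < K' i")
      case True
      have "nat (int k + d i) < N" using b[of i] True nn[of i] False by linarith
      then have "y i (nat (int k + d i)) = x i (nat (int k + d i))" using y by (auto simp: cyl_def)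
      also have "\<dots> = x i k" using per[of i k] False by simp
      finally show ?thesis using True False by (simp add: Mk_def)
    qed (use False in \<open>simp add: Mk_def\<close>)
  qed
qed

lemma fin_bound: "\<exists>B. \<forall>i. (h::'n::finite \<Rightarrow> nat) i \<le> B"
  by (rule exI[of _ "Max (range h)"]) simp

lemma form_agree:
  fixes x :: "'n::finite \<Rightarrow> cantor"
  assumes "form x f d" "form x g d"
  shows "\<exists>N. \<forall>y\<in>cyl N x. f y = g y"
proof -
  obtain K N where K: "\<And>i. 0 \<le> int (K i) + d i" "\<And>i k. K i \<le> k \<Longrightarrow> x i (nat (int k + d i)) = x i k"
     "\<And>y. y\<in>cyl N x \<Longrightarrow> f y = Mk x K d y" using assms(1) unfolding form_def by blast
  obtain K' N' where K': "\<And>i. 0 \<le> int (K' i) + d i" "\<And>i k. K' i \<le> k \<Longrightarrow> x i (nat (int k + d i)) = x i k"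
     "\<And>y. y\<in>cyl N' x \<Longrightarrow> g y = Mk x K' d y" using assms(2) unfolding form_def by blast
  obtain B where B: "\<And>i. K i + K' i + nat \<bar>d i\<bar> \<le> B" using fin_bound[of "\<lambda>i. K i + K' i + nat \<bar>d i\<bar>"] by blast
  define M where "M = N + N' + B"
  define L where "L = (\<lambda>i. max (K i) (K' i))"
  have cy: "y \<in> cyl M x \<Longrightarrow> y \<in> cyl N x \<and> y \<in> cyl N' x" for y by (auto simp: cyl_def M_def)
  show ?thesis
  proof (intro exI ballI)
    fix y assume y: "y \<in> cyl M x"
    have bb: "int (L i) + d i \<le> int M" for i using B[of i] by (auto simp: L_def M_def)
    have "f y = Mk x K d y" using K(3) cy y by blast
    also have "\<dots> = Mk x L d y" by (rule Mk_enlarge[OF K(2) K(1) _ y bb]) (auto simp: L_def)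
    also have "\<dots> = Mk x K' d y" by (rule Mk_enlarge[OF K'(2) K'(1) _ y bb, symmetric]) (auto simp: L_def)
    also have "\<dots> = g y" using K'(3) cy y by metis
    finally show "f y = g y" .
  qed
qed

lemma form_germ:
  fixes x :: "'n::finite \<Rightarrow> cantor"
  assumes "form x f d" "form x g d"
  shows "germ_equiv cantor_pow_top x f g"
proof -
  obtain N where "\<forall>y\<in>cyl N x. f y = g y" using form_agree[OF assms] by blast
  moreover have "x \<in> cyl N x" by (simp add: cyl_def)
  ultimately show ?thesis unfolding germ_equiv_def using open_cyl by blast
qed

lemma form_unique:
  fixes x :: "'n::finite \<Rightarrow> cantor"
  assumes f: "form x f d" and g: "form x g e" and ge: "germ_equiv cantor_pow_top x f g"
  shows "d = e"
proof (rule ccontr)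
  assume "d \<noteq> e"
  then obtain i where ne: "d i \<noteq> e i" by blast
  obtain K N where K: "\<And>i. 0 \<le> int (K i) + d i" "\<And>i k. K i \<le> k \<Longrightarrow> x i (nat (int k + d i)) = x i k"
     "\<And>y. y\<in>cyl N x \<Longrightarrow> f y = Mk x K d y" using f unfolding form_def by blast
  obtain K' N' where K': "\<And>i. 0 \<le> int (K' i) + e i" "\<And>i k. K' i \<le> k \<Longrightarrow> x i (nat (int k + e i)) = x i k"
     "\<And>y. y\<in>cyl N' x \<Longrightarrow> g y = Mk x K' e y" using g unfolding form_def by blast
  obtain U where U: "openin cantor_pow_top U" "x \<in> U" "\<forall>y\<in>U. f y = g y"
    using ge unfolding germ_equiv_def by blast
  obtain N0 where N0: "cyl N0 x \<subseteq> U" using cyl_in_open[OF U(1,2)] by blast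
  define m where "m = N + N' + N0 + K i + K' i + nat \<bar>d i\<bar> + nat \<bar>e i\<bar> + 1"
  define k where "k = nat (int m - d i)"
  have mint: "int m = int N + int N' + int N0 + int (K i) + int (K' i) + \<bar>d i\<bar> + \<bar>e i\<bar> + 1"
    by (simp add: m_def)
  have kint: "int k = int m - d i" unfolding k_def using mint by simp
  define y where "y = (\<lambda>j l. if j = i \<and> l = m then \<not> x i m else x j l)"
  have ycyl: "y \<in> cyl M x" if "M \<le> m" for M using that by (auto simp: y_def cyl_def)
  have yU: "y \<in> U" using N0 ycyl[of N0] by (auto simp: m_def)
  have km: "nat (int k + d i) = m" using kint by simp
  have kK: "\<not> k < K i" "\<not> k < K' i" using kint mint by linarith+
  have fy: "f y i k = (\<not> x i m)"
    using K(3)[OF ycyl[of N]] kK km by (simp add: m_def Mk_def y_def)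
  have ke: "nat (int k + e i) \<noteq> m" using ne kint mint by linarith
  have "g y i k = x i (nat (int k + e i))"
    using K'(3)[OF ycyl[of N']] kK ke by (simp add: m_def Mk_def y_def)
  also have "\<dots> = x i k" using K'(2)[of i k] kK by simp
  also have "\<dots> = x i m" using K(2)[of i k] kK km by simp
  finally have gy: "g y i k = x i m" .
  have "f y = g y" using U(3) yU by blast
  then have "f y i k = g y i k" by simp
  then show False using fy gy by simp
qed

lemma form_comp:
  fixes x :: "'n::finite \<Rightarrow> cantor"
  assumes f: "form x f d" and g: "form x g e"
  shows "form x (f \<circ> g) (\<lambda>i. d i + e i)"
proof -
  obtain K N where K: "\<And>i. 0 \<le> int (K i) + d i" "\<And>i k. K i \<le> k \<Longrightarrow> x i (nat (int k + d i)) = x i k"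
     "\<And>y. y\<in>cyl N x \<Longrightarrow> f y = Mk x K d y" using f unfolding form_def by blast
  obtain K' N' where K': "\<And>i. 0 \<le> int (K' i) + e i" "\<And>i k. K' i \<le> k \<Longrightarrow> x i (nat (int k + e i)) = x i k"
     "\<And>y. y\<in>cyl N' x \<Longrightarrow> g y = Mk x K' e y" using g unfolding form_def by blast
  define L where "L = (\<lambda>i. K i + K' i + nat \<bar>d i\<bar>)"
  obtain B where B: "\<And>i. L i + nat \<bar>d i\<bar> + nat \<bar>e i\<bar> \<le> B" using fin_bound[of "\<lambda>i. L i + nat \<bar>d i\<bar> + nat \<bar>e i\<bar>"] by blast
  define M where "M = N + N' + B"
  have nn: "0 \<le> int (L i) + (d i + e i)" for i using K'(1)[of i] by (simp add: L_def)
  have per: "x i (nat (int k + (d i + e i))) = x i k" if "L i \<le> k" for i k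
  proof -
    have "x i (nat (int k + (d i + e i))) = x i (nat (int (nat (int k + d i)) + e i))"
      using K(1)[of i] that by (simp add: L_def add.assoc)
    also have "\<dots> = x i (nat (int k + d i))" by (rule K'(2)) (use that in \<open>simp add: L_def\<close>)
    also have "\<dots> = x i k" by (rule K(2)) (use that in \<open>simp add: L_def\<close>)
    finally show ?thesis .
  qed
  have main: "(f \<circ> g) y = Mk x L (\<lambda>i. d i + e i) y" if y: "y \<in> cyl M x" for y
  proof -
    have yN': "y \<in> cyl N' x" using y by (auto simp: cyl_def M_def)
    have gy: "g y = Mk x K' e y" using K'(3) yN' by blast
    have gyc: "g y \<in> cyl N x"
    proof -
      have "g y i k = x i k" if kN: "k < N" for i k
      proof (cases "k < K' i")
        case True then show ?thesis by (simp add: gy Mk_def)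
      next
        case False
        have b: "int (L i + nat \<bar>d i\<bar> + nat \<bar>e i\<bar>) \<le> int B" using B[of i] by (simp only: of_nat_le_iff)
        have lt: "int k + e i < int M" using b kN unfolding M_def by simp
        have nn0: "0 \<le> int k + e i" using K'(1)[of i] False by simp
        have lt2: "nat (int k + e i) < M" using lt nn0 by (simp add: nat_less_iff)
        have yx: "y i (nat (int k + e i)) = x i (nat (int k + e i))"
          using y lt2 unfolding cyl_def by blast
        have "g y i k = y i (nat (int k + e i))" using False by (simp add: gy Mk_def)
        also have "\<dots> = x i k" using yx K'(2)[of i k] False by simp
        finally show ?thesis .
      qed
      then show ?thesis unfolding cyl_def by blast
    qed
    have fg: "(f \<circ> g) y = Mk x K d (Mk x K' e y)" using K(3)[OF gyc] gy by simp
    show ?thesis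
    proof (intro ext)
      fix i k
      show "(f \<circ> g) y i k = Mk x L (\<lambda>i. d i + e i) y i k"
      proof (cases "k < K i")
        case True then show ?thesis unfolding fg by (simp add: Mk_def L_def)
      next
        case False
        note kK = False
        define j where "j = nat (int k + d i)"
        have jint: "int j = int k + d i" using K(1)[of i] kK by (simp add: j_def)
        have xj: "x i j = x i k" using K(2)[of i k] kK by (simp add: j_def)
        have fgk: "(f \<circ> g) y i k = Mk x K' e y i j" unfolding fg using kK by (simp add: Mk_def j_def)
        show ?thesis
        proof (cases "k < L i")
          case True
          note kL = True
          have lhs: "(f \<circ> g) y i k = x i k"
          proof (cases "j < K' i")
            case True then show ?thesis unfolding fgk by (simp add: Mk_def xj)
          next
            case False
            have b: "int (L i + nat \<bar>d i\<bar> + nat \<bar>e i\<bar>) \<le> int B" using B[of i] by (simp only: of_nat_le_iff)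
            have lt: "int j + e i < int M" using b jint kL unfolding M_def L_def by simp
            have nn0: "0 \<le> int j + e i" using K'(1)[of i] False by simp
            have lt2: "nat (int j + e i) < M" using lt nn0 by (simp add: nat_less_iff)
            have "y i (nat (int j + e i)) = x i (nat (int j + e i))"
              using y lt2 unfolding cyl_def by blast
            also have "\<dots> = x i j" using K'(2)[of i j] False by simp
            finally show ?thesis unfolding fgk using False by (simp add: Mk_def xj)
          qed
          then show ?thesis using kL by (simp add: Mk_def)
        next
          case False
          have "\<not> j < K' i" using jint False by (simp add: L_def)
          moreover have "nat (int j + e i) = nat (int k + (d i + e i))" using jint by simp
          ultimately show ?thesis unfolding fgk using False by (simp add: Mk_def)
        qed
      qed
    qed
  qed
  show ?thesis unfolding form_def
    by (rule exI[of _ L], rule exI[of _ M]) (use nn per main in blast)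
qed

lemma form_id: "form x id (\<lambda>i. 0)"
  unfolding form_def by (rule exI[of _ "\<lambda>i. 0"], rule exI[of _ 0]) (simp add: Mk_def)



definition eper :: "cantor \<Rightarrow> nat \<Rightarrow> bool" where
  "eper s q \<longleftrightarrow> 0 < q \<and> (\<exists>K. \<forall>k\<ge>K. s (k + q) = s k)"

definition minper :: "cantor \<Rightarrow> nat" where
  "minper s = (LEAST q. eper s q)"

lemma per_mult:
  assumes "\<forall>k\<ge>K. s (k + q) = s (k::nat)" "K \<le> k"
  shows "s (k + q * m) = s k"
proof (induction m)
  case (Suc m)
  have "s (k + q * Suc m) = s ((k + q * m) + q)" by (simp add: algebra_simps)
  also have "\<dots> = s (k + q * m)" using assms by simp
  finally show ?case using Suc by simp
qed simp

lemma rational_eper: "rational_pt s \<longleftrightarrow> (\<exists>q. eper s q)"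
proof
  assume "rational_pt s"
  then obtain P w where w: "w \<noteq> []" "s = prepend P (cycle_str w)" unfolding rational_pt_def by blast
  have "s (k + length w) = s k" if "k \<ge> length P" for k
  proof -
    have e: "k + length w - length P = (k - length P) + length w" using that by simp
    have em: "(k + length w - length P) mod length w = (k - length P) mod length w"
      unfolding e by simp
    show ?thesis using that unfolding w(2) prepend_def cycle_str_def by (simp add: em)
  qed
  then show "\<exists>q. eper s q" using w(1) unfolding eper_def by blast
next
  assume "\<exists>q. eper s q"
  then obtain q K where q: "0 < q" "\<forall>k\<ge>K. s (k + q) = s k" unfolding eper_def by blast
  define P where "P = map s [0..<K]"
  define w where "w = map (\<lambda>j. s (K + j)) [0..<q]"
  have "s = prepend P (cycle_str w)"
  proof
    fix k
    show "s k = prepend P (cycle_str w) k"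
    proof (cases "k < K")
      case True then show ?thesis by (simp add: prepend_def P_def)
    next
      case False
      have e0: "(k - K) mod q + q * ((k - K) div q) = k - K" by (rule mod_mult_div_eq)
      have "(K + (k - K) mod q) + q * ((k - K) div q) = k" using e0 False by linarith
      then have "s k = s ((K + (k - K) mod q) + q * ((k - K) div q))" by simp
      also have "\<dots> = s (K + (k - K) mod q)" by (rule per_mult[OF q(2)]) simp
      finally show ?thesis using False q(1) by (simp add: prepend_def P_def cycle_str_def w_def)
    qed
  qed
  moreover have "w \<noteq> []" using q(1) by (simp add: w_def)
  ultimately show "rational_pt s" unfolding rational_pt_def by blast
qed

lemma minper_eper: "rational_pt s \<Longrightarrow> eper s (minper s)"
  unfolding minper_def rational_eper by (rule LeastI_ex)

lemma minper_pos: "rational_pt s \<Longrightarrow> 0 < minper s"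
  using minper_eper eper_def by blast

lemma minper_dvd:
  assumes q: "eper s q" shows "minper s dvd q"
proof -
  have rat: "rational_pt s" using q rational_eper by blast
  define p where "p = minper s"
  have p: "eper s p" using minper_eper[OF rat] p_def by simp
  obtain Kp where Kp: "\<forall>k\<ge>Kp. s (k + p) = s k" using p eper_def by blast
  obtain Kq where Kq: "\<forall>k\<ge>Kq. s (k + q) = s k" using q eper_def by blast
  define r where "r = q mod p"
  show ?thesis
  proof (rule ccontr)
    assume "\<not> minper s dvd q"
    then have r0: "0 < r" unfolding r_def p_def by (simp add: dvd_eq_mod_eq_0)
    have "s (k + r) = s k" if "k \<ge> Kp + Kq" for k
    proof -
      have "s (k + r) = s (k + r + p * (q div p))" by (rule per_mult[OF Kp, symmetric]) (use that in simp)
      also have "k + r + p * (q div p) = k + q"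
      proof -
        have "q mod p + p * (q div p) = q" by (rule mod_mult_div_eq)
        then show ?thesis unfolding r_def by linarith
      qed
      also have "s (k + q) = s k" using Kq that by simp
      finally show ?thesis .
    qed
    then have "eper s r" using r0 unfolding eper_def by blast
    then have "p \<le> r" unfolding p_def minper_def by (rule Least_le)
    moreover have "r < p" unfolding r_def using p eper_def by auto
    ultimately show False by simp
  qed
qed

lemma form_per:
  assumes "form x f d" "d i \<noteq> 0" shows "eper (x i) (nat \<bar>d i\<bar>)"
proof -
  obtain K where K: "\<And>i k. K i \<le> k \<Longrightarrow> x i (nat (int k + d i)) = x i k"
    using assms(1) unfolding form_def by blast
  have "x i (k + nat \<bar>d i\<bar>) = x i k" if "k \<ge> K i + nat \<bar>d i\<bar>" for k
  proof (cases "d i > 0")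
    case True
    then show ?thesis using K[of i k] that by (simp add: nat_add_distrib)
  next
    case False
    have pre: "K i \<le> k + nat \<bar>d i\<bar>" using that by simp
    have e1: "nat (int (k + nat \<bar>d i\<bar>) + d i) = k" using False by simp
    have "x i (nat (int (k + nat \<bar>d i\<bar>) + d i)) = x i (k + nat \<bar>d i\<bar>)" by (rule K[OF pre])
    then have "x i k = x i (k + nat \<bar>d i\<bar>)" unfolding e1 .
    then show ?thesis by simp
  qed
  then show ?thesis using assms(2) unfolding eper_def by auto
qed

lemma rect_iff: "y \<in> rect D \<longleftrightarrow> (\<forall>i k. k < length (D i) \<longrightarrow> y i k = D i ! k)"
proof
  assume "y \<in> rect D"
  then obtain z where z: "y = (\<lambda>i. prepend (D i) (z i))" unfolding rect_def by blast
  show "\<forall>i k. k < length (D i) \<longrightarrow> y i k = D i ! k"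
  proof (intro allI impI)
    fix i k assume "k < length (D i)"
    then show "y i k = D i ! k" unfolding z prepend_def by simp
  qed
next
  assume a: "\<forall>i k. k < length (D i) \<longrightarrow> y i k = D i ! k"
  have "y = (\<lambda>i. prepend (D i) (\<lambda>k. y i (k + length (D i))))"
  proof (intro ext)
    fix i k
    show "y i k = prepend (D i) (\<lambda>k. y i (k + length (D i))) k"
      using a by (cases "k < length (D i)") (simp_all add: prepend_def)
  qed
  then show "y \<in> rect D" unfolding rect_def
    by (intro CollectI exI[of _ "\<lambda>i k. y i (k + length (D i))"])
qed

lemma rect_map_nth:
  "rect_map D R y i k = (if k < length (R i) then R i ! k
      else y i (nat (int k + (int (length (D i)) - int (length (R i))))))"
proof (cases "k < length (R i)")
  case False
  have "nat (int k + (int (length (D i)) - int (length (R i)))) = k - length (R i) + length (D i)"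
    using False by simp
  then show ?thesis using False by (simp add: rect_map_def prepend_def)
qed (simp add: rect_map_def prepend_def)

lemma nV_form:
  fixes x :: "'n::finite \<Rightarrow> cantor"
  assumes f: "f \<in> nV" and fx: "f x = x"
  shows "\<exists>d. form x f d"
proof -
  obtain k D R where pat: "is_pattern k D" and fm: "\<forall>j<k. \<forall>y\<in>rect (D j). f y = rect_map (D j) (R j) y"
    using f unfolding nV_def by blast
  have "x \<in> (\<Union>j<k. rect (D j))" using pat unfolding is_pattern_def by simp
  then obtain j where j: "j < k" "x \<in> rect (D j)" by blast
  define Dj where "Dj = D j"
  define Rj where "Rj = R j"
  have fm': "f y = rect_map Dj Rj y" if "y \<in> rect Dj" for y
    using fm j(1) that unfolding Dj_def Rj_def by blast
  define N where "N = Max (range (\<lambda>i. length (Dj i)))"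
  have xD: "\<forall>i k. k < length (Dj i) \<longrightarrow> x i k = Dj i ! k" using j(2) unfolding Dj_def rect_iff .
  have cN: "cyl N x \<subseteq> rect Dj"
  proof
    fix y assume y: "y \<in> cyl N x"
    have "y i k = Dj i ! k" if "k < length (Dj i)" for i k
    proof -
      have "length (Dj i) \<le> N" unfolding N_def by (rule Max_ge) auto
      then have "k < N" using that by simp
      then have "y i k = x i k" using y unfolding cyl_def by blast
      then show ?thesis using xD that by simp
    qed
    then show "y \<in> rect Dj" unfolding rect_iff by blast
  qed
  define K where "K = (\<lambda>i. length (Rj i))"
  define d where "d = (\<lambda>i. int (length (Dj i)) - int (length (Rj i)))"
  have rm: "rect_map Dj Rj y i k = (if k < K i then Rj i ! k else y i (nat (int k + d i)))" for y i k
    unfolding K_def d_def by (rule rect_map_nth)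
  have xfx: "rect_map Dj Rj x = x" using fm'[OF j(2)[folded Dj_def]] fx by simp
  have R1: "Rj i ! k = x i k" if "k < K i" for i k
  proof -
    have "rect_map Dj Rj x i k = x i k" using xfx by simp
    then show ?thesis using rm[of x i k] that by simp
  qed
  have R2: "x i (nat (int k + d i)) = x i k" if "K i \<le> k" for i k
  proof -
    have "rect_map Dj Rj x i k = x i k" using xfx by simp
    then show ?thesis using rm[of x i k] that by simp
  qed
  have nn: "0 \<le> int (K i) + d i" for i by (simp add: K_def d_def)
  have main: "\<forall>y\<in>cyl N x. f y = Mk x K d y"
  proof
    fix y assume y: "y \<in> cyl N x"
    have fy: "f y = rect_map Dj Rj y" using fm' cN y by blast
    show "f y = Mk x K d y"
    proof (intro ext)
      fix i k show "f y i k = Mk x K d y i k" unfolding fy rm Mk_def using R1[of k i] by simp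
    qed
  qed
  have "form x f d" unfolding form_def
    by (intro exI[of _ K] exI[of _ N]) (use nn R2 main in blast)
  then show ?thesis by blast
qed



definition partL :: "bool list list \<Rightarrow> bool" where
  "partL Ds \<longleftrightarrow> (\<forall>y. \<exists>j<length Ds. y \<in> bcone (Ds ! j)) \<and>
     (\<forall>j<length Ds. \<forall>j'<length Ds. j \<noteq> j' \<longrightarrow> bcone (Ds ! j) \<inter> bcone (Ds ! j') = {})"

definition cmpl :: "bool list \<Rightarrow> bool list list" where
  "cmpl Q = map (\<lambda>k. take k Q @ [\<not> Q ! k]) [0..<length Q]"

lemma cone_snoc:
  assumes "k < length Q"
  shows "y \<in> bcone (take k Q @ [b]) \<longleftrightarrow> (\<forall>l<k. y l = Q ! l) \<and> y k = b"
proof -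
  have len: "length (take k Q @ [b]) = Suc k" using assms by simp
  have nth: "(take k Q @ [b]) ! l = (if l < k then Q ! l else b)" if "l < Suc k" for l
    using that assms by (auto simp: nth_append)
  show ?thesis unfolding bcone_def len mem_Collect_eq
  proof (rule iffI)
    assume a: "\<forall>m<Suc k. y m = (take k Q @ [b]) ! m"
    have "y l = Q ! l" if l: "l < k" for l using nth[of l] a[rule_format, of l] l by simp
    moreover have "y k = b" using nth[of k] a[rule_format, of k] by simp
    ultimately show "(\<forall>l<k. y l = Q ! l) \<and> y k = b" by blast
  next
    assume a: "(\<forall>l<k. y l = Q ! l) \<and> y k = b"
    have "y l = (take k Q @ [b]) ! l" if l: "l < Suc k" for l
    proof (cases "l < k")
      case True then show ?thesis using a nth[of l] l by simp
    next
      case False then have "l = k" using l by simp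
      then show ?thesis using a nth[of l] l by simp
    qed
    then show "\<forall>m<Suc k. y m = (take k Q @ [b]) ! m" by blast
  qed
qed

lemma part_comp: "partL (Q # cmpl Q)"
  unfolding partL_def
proof (intro conjI allI impI)
  fix y
  show "\<exists>j<length (Q # cmpl Q). y \<in> bcone ((Q # cmpl Q) ! j)"
  proof (cases "y \<in> bcone Q")
    case True then show ?thesis by (intro exI[of _ 0]) simp
  next
    case False
    then have ex: "\<exists>k. k < length Q \<and> y k \<noteq> Q ! k" unfolding bcone_def by blast
    define k0 where "k0 = (LEAST k. k < length Q \<and> y k \<noteq> Q ! k)"
    have k0: "k0 < length Q" "y k0 \<noteq> Q ! k0" using LeastI_ex[OF ex] unfolding k0_def by blast+
    have bef: "y l = Q ! l" if "l < k0" for l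
    proof (rule ccontr)
      assume "y l \<noteq> Q ! l"
      then have "k0 \<le> l" unfolding k0_def using that k0(1) by (intro Least_le) simp
      then show False using that by simp
    qed
    have "y \<in> bcone (take k0 Q @ [\<not> Q ! k0])"
      unfolding cone_snoc[OF k0(1)] using bef k0(2) by simp
    then show ?thesis using k0(1)
      by (intro exI[of _ "Suc k0"]) (simp add: cmpl_def)
  qed
next
  fix j j' assume j: "j < length (Q # cmpl Q)" and j': "j' < length (Q # cmpl Q)" and ne: "j \<noteq> j'"
  have c0: "bcone ((Q # cmpl Q) ! 0) = bcone Q" by simp
  have cS: "bcone ((Q # cmpl Q) ! Suc k) = {y. (\<forall>l<k. y l = Q ! l) \<and> y k = (\<not> Q ! k)}"
    if "k < length Q" for k
    using that cone_snoc[OF that] by (auto simp: cmpl_def)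
  have d0: "bcone Q \<inter> bcone ((Q # cmpl Q) ! Suc k) = {}" if "k < length Q" for k
    using that unfolding cS[OF that] by (auto simp: bcone_def)
  have dS: "bcone ((Q # cmpl Q) ! Suc k) \<inter> bcone ((Q # cmpl Q) ! Suc k') = {}"
    if "k < length Q" "k' < length Q" "k < k'" for k k'
    using that unfolding cS[OF that(1)] cS[OF that(2)] by auto
  show "bcone ((Q # cmpl Q) ! j) \<inter> bcone ((Q # cmpl Q) ! j') = {}"
  proof (cases j)
    case 0
    then obtain k' where "j' = Suc k'" using ne by (cases j') auto
    then show ?thesis using 0 d0[of k'] j' by (simp add: cmpl_def)
  next
    case (Suc k)
    show ?thesis
    proof (cases j')
      case 0 then show ?thesis using Suc d0[of k] j by (auto simp: cmpl_def)
    next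
      case (Suc k')
      have kk: "k < length Q" "k' < length Q" "k \<noteq> k'" using j j' ne \<open>j = Suc k\<close> Suc by (auto simp: cmpl_def)
      show ?thesis
      proof (cases "k < k'")
        case True then show ?thesis using dS[of k k'] kk \<open>j = Suc k\<close> Suc by simp
      next
        case False then have "k' < k" using kk by simp
        then show ?thesis using dS[of k' k] kk \<open>j = Suc k\<close> Suc by auto
      qed
    qed
  qed
qed

lemma cone_split: "bcone c = bcone (c @ [True]) \<union> bcone (c @ [False])"
  and cone_split_disj: "bcone (c @ [True]) \<inter> bcone (c @ [False]) = {}"
  and cone_split_sub: "bcone (c @ [b]) \<subseteq> bcone c"
proof -
  have m: "y \<in> bcone (c @ [b]) \<longleftrightarrow> y \<in> bcone c \<and> y (length c) = b" for y b
  proof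
    assume "y \<in> bcone (c @ [b])"
    then have a: "\<forall>k<Suc (length c). y k = (c @ [b]) ! k" unfolding bcone_def by simp
    have "y k = c ! k" if "k < length c" for k using a[rule_format, of k] that by (simp add: nth_append)
    moreover have "y (length c) = b" using a[rule_format, of "length c"] by simp
    ultimately show "y \<in> bcone c \<and> y (length c) = b" unfolding bcone_def by blast
  next
    assume a: "y \<in> bcone c \<and> y (length c) = b"
    have "y k = (c @ [b]) ! k" if "k < Suc (length c)" for k
    proof (cases "k < length c")
      case True then show ?thesis using a by (simp add: bcone_def nth_append)
    next
      case False then have "k = length c" using that by simp
      then show ?thesis using a by simp
    qed
    then show "y \<in> bcone (c @ [b])" unfolding bcone_def by simp
  qed
  show "bcone c = bcone (c @ [True]) \<union> bcone (c @ [False])" using m by blast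
  show "bcone (c @ [True]) \<inter> bcone (c @ [False]) = {}" using m by blast
  show "bcone (c @ [b]) \<subseteq> bcone c" using m by blast
qed

lemma part_split:
  assumes p: "partL (A @ [c])"
  shows "partL ((A @ [c @ [True]]) @ [c @ [False]])"
proof -
  let ?B = "(A @ [c @ [True]]) @ [c @ [False]]"
  let ?n = "length A"
  have p1: "\<forall>y. \<exists>j<length (A @ [c]). y \<in> bcone ((A @ [c]) ! j)"
   and p2: "\<And>j j'. j < length (A @ [c]) \<Longrightarrow> j' < length (A @ [c]) \<Longrightarrow> j \<noteq> j' \<Longrightarrow>
          bcone ((A @ [c]) ! j) \<inter> bcone ((A @ [c]) ! j') = {}" using p unfolding partL_def by blast+
  have nA: "(A @ [c]) ! j = A ! j" "?B ! j = A ! j" if "j < ?n" for j using that by (auto simp: nth_append)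
  have nB1: "?B ! ?n = c @ [True]" and nB2: "?B ! Suc ?n = c @ [False]" by (auto simp: nth_append)
  have nc: "(A @ [c]) ! ?n = c" by simp
  have nB2': "(A @ [c @ [True], c @ [False]]) ! Suc ?n = c @ [False]" by (induction A) simp_all
  have lB: "length ?B = Suc (Suc ?n)" by simp
  define r where "r = (\<lambda>j. if j < ?n then j else ?n)"
  have sub: "bcone (?B ! j) \<subseteq> bcone ((A @ [c]) ! r j)" if "j < length ?B" for j
  proof (cases "j < ?n")
    case True then show ?thesis by (simp add: r_def nth_append)
  next
    case False
    moreover have "j < Suc (Suc ?n)" using that by simp
    ultimately have "j = ?n \<or> j = Suc ?n" by arith
    then show ?thesis
    proof
      assume "j = ?n"
      then have "?B ! j = c @ [True]" "(A @ [c]) ! r j = c" by (simp_all add: r_def nB1)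
      then show ?thesis using cone_split_sub[of c True] by simp
    next
      assume "j = Suc ?n"
      then have "?B ! j = c @ [False]" "(A @ [c]) ! r j = c" by (simp_all add: r_def nB2')
      then show ?thesis using cone_split_sub[of c False] by simp
    qed
  qed
  have rl: "r j < length (A @ [c])" for j by (simp add: r_def)
  show ?thesis unfolding partL_def
  proof (intro conjI allI impI)
    fix y
    obtain j where j: "j < length (A @ [c])" "y \<in> bcone ((A @ [c]) ! j)" using p1 by blast
    show "\<exists>j<length ?B. y \<in> bcone (?B ! j)"
    proof (cases "j < ?n")
      case True then show ?thesis using j by (intro exI[of _ j]) (simp add: nth_append)
    next
      case False
      then have "j = ?n" using j by simp
      then have "y \<in> bcone c" using j by simp
      then have "y \<in> bcone (c @ [True]) \<or> y \<in> bcone (c @ [False])" using cone_split[of c] by blast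
      then show ?thesis
      proof
        assume "y \<in> bcone (c @ [True])" then show ?thesis by (intro exI[of _ ?n]) (simp add: nB1)
      next
        assume "y \<in> bcone (c @ [False])" then show ?thesis by (intro exI[of _ "Suc ?n"]) (simp add: nB2')
      qed
    qed
  next
    fix j j' assume j: "j < length ?B" and j': "j' < length ?B" and ne: "j \<noteq> j'"
    show "bcone (?B ! j) \<inter> bcone (?B ! j') = {}"
    proof (cases "r j = r j'")
      case False
      have "bcone ((A @ [c]) ! r j) \<inter> bcone ((A @ [c]) ! r j') = {}" using p2[OF rl rl False] .
      then show ?thesis using sub[OF j] sub[OF j'] by blast
    next
      case True
      then have "j \<ge> ?n" "j' \<ge> ?n" using ne unfolding r_def by (auto split: if_splits)
      then have "(j = ?n \<and> j' = Suc ?n) \<or> (j = Suc ?n \<and> j' = ?n)" using j j' ne by (simp; arith)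
      then show ?thesis using cone_split_disj[of c] by (auto simp: nth_append nB2')
    qed
  qed
qed

lemma part_pad:
  assumes "partL (A @ [c])"
  shows "\<exists>B. length B = Suc m \<and> partL (A @ B)"
  using assms
proof (induction m arbitrary: A c)
  case 0 then show ?case by (intro exI[of _ "[c]"]) simp
next
  case (Suc m)
  have "partL ((A @ [c @ [True]]) @ [c @ [False]])" by (rule part_split[OF Suc.prems])
  then obtain B where B: "length B = Suc m" "partL ((A @ [c @ [True]]) @ B)" using Suc.IH by blast
  show ?case using B by (intro exI[of _ "(c @ [True]) # B"]) simp
qed

lemma oneD_aux:
  assumes q1: "Q1 \<noteq> []" and q2: "Q2 \<noteq> []" and le: "length Q2 \<le> length Q1"
  shows "\<exists>Ds Rs. length Ds = length Rs \<and> partL Ds \<and> partL Rs \<and> Ds \<noteq> [] \<and> Ds ! 0 = Q1 \<and> Rs ! 0 = Q2"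
proof -
  have cne: "cmpl Q2 \<noteq> []" using q2 by (simp add: cmpl_def)
  define A where "A = Q2 # butlast (cmpl Q2)"
  define c where "c = last (cmpl Q2)"
  have "A @ [c] = Q2 # cmpl Q2" unfolding A_def c_def using cne by simp
  then have "partL (A @ [c])" using part_comp by simp
  then obtain B where B: "length B = Suc (length Q1 - length Q2)" "partL (A @ B)" using part_pad by blast
  have lA: "length A = length Q2" using cne by (simp add: A_def cmpl_def)
  show ?thesis
  proof (intro exI conjI)
    show "length (Q1 # cmpl Q1) = length (A @ B)" using B(1) lA le by (simp add: cmpl_def)
    show "partL (Q1 # cmpl Q1)" by (rule part_comp)
    show "partL (A @ B)" by (rule B(2))
    show "Q1 # cmpl Q1 \<noteq> []" by simp
    show "(Q1 # cmpl Q1) ! 0 = Q1" by simp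
    show "(A @ B) ! 0 = Q2" by (simp add: A_def)
  qed
qed

lemma oneD:
  assumes q1: "Q1 \<noteq> []" and q2: "Q2 \<noteq> []"
  shows "\<exists>Ds Rs. length Ds = length Rs \<and> partL Ds \<and> partL Rs \<and> Ds \<noteq> [] \<and> Ds ! 0 = Q1 \<and> Rs ! 0 = Q2"
proof (cases "length Q2 \<le> length Q1")
  case True then show ?thesis using oneD_aux[OF q1 q2] by blast
next
  case False
  then obtain Ds Rs where "length Ds = length Rs" "partL Ds" "partL Rs" "Ds \<noteq> []" "Ds ! 0 = Q2" "Rs ! 0 = Q1"
    using oneD_aux[OF q2 q1] by force
  then show ?thesis by (intro exI[of _ Rs] exI[of _ Ds]) auto
qed



definition pm :: "bool list list \<Rightarrow> bool list list \<Rightarrow> cantor \<Rightarrow> cantor" where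
  "pm Ds Rs y = (let j = (THE j. j < length Ds \<and> y \<in> bcone (Ds ! j))
     in prepend (Rs ! j) (\<lambda>k. y (k + length (Ds ! j))))"

lemma partL_disj:
  assumes "partL Ds" "j < length Ds" "j' < length Ds" "j \<noteq> j'"
  shows "bcone (Ds ! j) \<inter> bcone (Ds ! j') = {}"
proof -
  have "\<forall>j<length Ds. \<forall>j'<length Ds. j \<noteq> j' \<longrightarrow> bcone (Ds ! j) \<inter> bcone (Ds ! j') = {}"
    using assms(1) unfolding partL_def by (rule conjunct2)
  then show ?thesis using assms(2-4) by blast
qed

lemma partL_the:
  assumes p: "partL Ds" and j: "j < length Ds" "y \<in> bcone (Ds ! j)"
  shows "(THE j. j < length Ds \<and> y \<in> bcone (Ds ! j)) = j"
proof (rule the_equality)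
  show "j < length Ds \<and> y \<in> bcone (Ds ! j)" using j by simp
next
  fix j' assume j': "j' < length Ds \<and> y \<in> bcone (Ds ! j')"
  show "j' = j"
  proof (rule ccontr)
    assume "j' \<noteq> j"
    then have "bcone (Ds ! j') \<inter> bcone (Ds ! j) = {}" using partL_disj[OF p, of j' j] j(1) j' by blast
    then show False using j(2) j' by blast
  qed
qed

lemma pm_eq:
  assumes "partL Ds" "j < length Ds" "y \<in> bcone (Ds ! j)"
  shows "pm Ds Rs y = prepend (Rs ! j) (\<lambda>k. y (k + length (Ds ! j)))"
  unfolding pm_def partL_the[OF assms] Let_def ..

lemma prepend_in: "prepend Q z \<in> bcone Q"
  unfolding bcone_def prepend_def by simp

lemma prepend_drop: "(\<lambda>k. prepend Q z (k + length Q)) = z"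
  unfolding prepend_def by simp

lemma bcone_prepend: "y \<in> bcone Q \<Longrightarrow> prepend Q (\<lambda>k. y (k + length Q)) = y"
  unfolding bcone_def prepend_def by (auto simp: fun_eq_iff)

lemma partL_ex: "partL Ds \<Longrightarrow> \<exists>j. j < length Ds \<and> y \<in> bcone (Ds ! j)"
  unfolding partL_def by blast

lemma pm_inv:
  assumes p: "partL Ds" "partL Rs" "length Ds = length Rs"
  shows "pm Rs Ds (pm Ds Rs y) = y"
proof -
  obtain j where j: "j < length Ds" "y \<in> bcone (Ds ! j)" using partL_ex[OF p(1)] by blast
  define z where "z = (\<lambda>k. y (k + length (Ds ! j)))"
  have e1: "pm Ds Rs y = prepend (Rs ! j) z" unfolding z_def by (rule pm_eq[OF p(1) j])
  have j2: "j < length Rs" using j p(3) by simp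
  have "pm Rs Ds (prepend (Rs ! j) z) = prepend (Ds ! j) (\<lambda>k. prepend (Rs ! j) z (k + length (Rs ! j)))"
    by (rule pm_eq[OF p(2) j2 prepend_in])
  also have "\<dots> = prepend (Ds ! j) z" unfolding prepend_drop ..
  also have "\<dots> = y" unfolding z_def by (rule bcone_prepend[OF j(2)])
  finally show ?thesis unfolding e1 .
qed

lemma len_le_sum: "j < length Ds \<Longrightarrow> length (Ds ! j) \<le> sum_list (map length Ds)"
proof (induction Ds arbitrary: j)
  case (Cons a Ds)
  show ?case
  proof (cases j)
    case 0 then show ?thesis by simp
  next
    case (Suc j')
    then have "length (Ds ! j') \<le> sum_list (map length Ds)" using Cons by simp
    then show ?thesis using Suc by simp
  qed
qed simp

lemma pm_cont:
  assumes p: "partL Ds"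
  shows "continuous_map cantor_top cantor_top (pm Ds Rs)"
proof (rule cont_cantor)
  fix k
  define S where "S = sum_list (map length Ds)"
  show "\<exists>N. \<forall>y y'. (\<forall>j<N. y j = y' j) \<longrightarrow> pm Ds Rs y k = pm Ds Rs y' k"
  proof (intro exI allI impI)
    fix y y' :: cantor assume a: "\<forall>j<S + k + 1. y j = y' j"
    obtain j where j: "j < length Ds" "y \<in> bcone (Ds ! j)" using partL_ex[OF p] by blast
    have lS: "length (Ds ! j) \<le> S" unfolding S_def by (rule len_le_sum[OF j(1)])
    have j': "y' \<in> bcone (Ds ! j)"
    proof -
      have "y' l = Ds ! j ! l" if "l < length (Ds ! j)" for l
      proof -
        have "y l = Ds ! j ! l" using j(2) that unfolding bcone_def by blast
        moreover have "y l = y' l" using a that lS by simp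
        ultimately show ?thesis by simp
      qed
      then show ?thesis unfolding bcone_def by blast
    qed
    have "pm Ds Rs y k = prepend (Rs ! j) (\<lambda>k. y (k + length (Ds ! j))) k" using pm_eq[OF p j] by simp
    also have "\<dots> = prepend (Rs ! j) (\<lambda>k. y' (k + length (Ds ! j))) k"
    proof (cases "k < length (Rs ! j)")
      case False
      have "k - length (Rs ! j) + length (Ds ! j) < S + k + 1" using lS by simp
      then have "y (k - length (Rs ! j) + length (Ds ! j)) = y' (k - length (Rs ! j) + length (Ds ! j))"
        using a by blast
      then show ?thesis using False by (simp add: prepend_def)
    qed (simp add: prepend_def)
    also have "\<dots> = pm Ds Rs y' k" using pm_eq[OF p j(1) j'] by simp
    finally show "pm Ds Rs y k = pm Ds Rs y' k" .
  qed
qed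

lemma pm_homeo:
  assumes p: "partL Ds" "partL Rs" "length Ds = length Rs"
  shows "homeomorphic_maps cantor_top cantor_top (pm Ds Rs) (pm Rs Ds)"
  unfolding homeomorphic_maps_def
  using pm_cont[OF p(1)] pm_cont[OF p(2)] pm_inv[OF p] pm_inv[OF p(2) p(1) p(3)[symmetric]] by simp

definition hm :: "('n \<Rightarrow> bool list list) \<Rightarrow> ('n \<Rightarrow> bool list list) \<Rightarrow> ('n \<Rightarrow> cantor) \<Rightarrow> ('n \<Rightarrow> cantor)" where
  "hm DS RS y = (\<lambda>i. pm (DS i) (RS i) (y i))"

lemma hm_cont:
  fixes DS :: "'n \<Rightarrow> bool list list"
  assumes "\<And>i. partL (DS i)"
  shows "continuous_map cantor_pow_top cantor_pow_top (hm DS RS)"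
  unfolding cantor_pow_top_def continuous_map_componentwise_UNIV
proof
  fix i :: 'n
  have "continuous_map (product_topology (\<lambda>_. cantor_top) UNIV) cantor_top (\<lambda>y. y i)"
    by (rule continuous_map_product_projection) simp
  then have "continuous_map (product_topology (\<lambda>_. cantor_top) UNIV) cantor_top (pm (DS i) (RS i) \<circ> (\<lambda>y. y i))"
    using continuous_map_compose pm_cont[OF assms] by blast
  then show "continuous_map (product_topology (\<lambda>_. cantor_top) UNIV) cantor_top (\<lambda>x. hm DS RS x i)"
    by (simp add: hm_def o_def)
qed

lemma hm_homeo:
  assumes p: "\<And>i. partL (DS i)" "\<And>i. partL (RS i)" "\<And>i. length (DS i) = length (RS i)"
  shows "homeomorphic_map cantor_pow_top cantor_pow_top (hm DS RS)"
proof -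
  have "homeomorphic_maps cantor_pow_top cantor_pow_top (hm DS RS) (hm RS DS)"
    unfolding homeomorphic_maps_def
  proof (intro conjI ballI)
    show "continuous_map cantor_pow_top cantor_pow_top (hm DS RS)" by (rule hm_cont[OF p(1)])
    show "continuous_map cantor_pow_top cantor_pow_top (hm RS DS)" by (rule hm_cont[OF p(2)])
    fix y
    show "hm RS DS (hm DS RS y) = y" unfolding hm_def using pm_inv[OF p(1) p(2) p(3)] by simp
    show "hm DS RS (hm RS DS y) = y" unfolding hm_def using pm_inv[OF p(2) p(1) p(3)[symmetric]] by simp
  qed
  then show ?thesis unfolding homeomorphic_map_maps by blast
qed

lemma rect_bcone: "y \<in> rect D \<longleftrightarrow> (\<forall>i. y i \<in> bcone (D i))"
  unfolding rect_iff bcone_def by blast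

lemma partL_PiE:
  fixes DS :: "'n::finite \<Rightarrow> bool list list"
  assumes p: "\<And>i. partL (DS i)" and e: "bij_betw e {0..<kk} (Pi\<^sub>E UNIV (\<lambda>i. {..<length (DS i)}))"
  shows "is_pattern kk (\<lambda>j i. DS i ! e j i)"
proof -
  let ?S = "Pi\<^sub>E UNIV (\<lambda>i. {..<length (DS i)})"
  let ?k = "kk"
  have img: "e ` {0..<?k} = ?S" using e unfolding bij_betw_def by (rule conjunct2)
  have inj: "inj_on e {0..<?k}" using e unfolding bij_betw_def by (rule conjunct1)
  have eS: "e j i < length (DS i)" if "j < ?k" for j i
  proof -
    have "e j \<in> ?S" using img that by auto
    then show ?thesis by (simp add: PiE_iff)
  qed
  have cover: "y \<in> (\<Union>j<?k. rect (\<lambda>i. DS i ! e j i))" for y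
  proof -
    have "\<forall>i. \<exists>j. j < length (DS i) \<and> y i \<in> bcone (DS i ! j)" using partL_ex[OF p] by blast
    from choice[OF this] obtain t where t: "\<And>i. t i < length (DS i) \<and> y i \<in> bcone (DS i ! t i)" by blast
    have tS: "t \<in> ?S" using t by (simp add: PiE_iff)
    have "t \<in> e ` {0..<?k}" using img tS by simp
    then obtain j where j: "j \<in> {0..<?k}" "e j = t" by blast
    have "\<forall>i. y i \<in> bcone (DS i ! e j i)" unfolding j(2) using t by blast
    then have "y \<in> rect (\<lambda>i. DS i ! e j i)" unfolding rect_bcone .
    then show ?thesis using j(1) by auto
  qed
  have disj: "rect (\<lambda>i. DS i ! e j i) \<inter> rect (\<lambda>i. DS i ! e j' i) = {}"
    if j: "j < ?k" "j' < ?k" "j \<noteq> j'" for j j'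
  proof -
    have "e j \<noteq> e j'"
    proof
      assume "e j = e j'"
      have jj: "j \<in> {0..<?k}" "j' \<in> {0..<?k}" using j(1,2) by simp_all
      have "j = j'" by (rule inj_onD[OF inj \<open>e j = e j'\<close> jj])
      then show False using j(3) by simp
    qed
    then have "\<exists>i. e j i \<noteq> e j' i" by (simp add: fun_eq_iff)
    then obtain i where i: "e j i \<noteq> e j' i" by (rule exE)
    have "bcone (DS i ! e j i) \<inter> bcone (DS i ! e j' i) = {}"
      by (rule partL_disj[OF p[of i] eS[OF j(1)] eS[OF j(2)] i])
    show ?thesis
    proof (rule equals0I)
      fix y assume "y \<in> rect (\<lambda>i. DS i ! e j i) \<inter> rect (\<lambda>i. DS i ! e j' i)"
      then have a: "y \<in> rect (\<lambda>i. DS i ! e j i)" "y \<in> rect (\<lambda>i. DS i ! e j' i)" by auto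
      have "y i \<in> bcone (DS i ! e j i)" using a(1) unfolding rect_bcone by blast
      moreover have "y i \<in> bcone (DS i ! e j' i)" using a(2) unfolding rect_bcone by blast
      ultimately have "y i \<in> bcone (DS i ! e j i) \<inter> bcone (DS i ! e j' i)" by blast
      then show False using \<open>bcone (DS i ! e j i) \<inter> bcone (DS i ! e j' i) = {}\<close> by simp
    qed
  qed
  have "(\<Union>j<?k. rect (\<lambda>i. DS i ! e j i)) = UNIV" using cover by blast
  then show ?thesis unfolding is_pattern_def using disj by blast
qed

lemma hm_nV:
  fixes DS :: "'n::finite \<Rightarrow> bool list list"
  assumes p: "\<And>i. partL (DS i)" "\<And>i. partL (RS i)" "\<And>i. length (DS i) = length (RS i)"
  shows "hm DS RS \<in> nV"
proof -
  let ?S = "Pi\<^sub>E UNIV (\<lambda>i. {..<length (DS i)})"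
  have fin: "finite ?S" by (rule finite_PiE) auto
  obtain e where e: "bij_betw e {0..<card ?S} ?S" using ex_bij_betw_nat_finite[OF fin] by blast
  have SR: "?S = Pi\<^sub>E UNIV (\<lambda>i. {..<length (RS i)})" using p(3) by simp
  have pD: "is_pattern (card ?S) (\<lambda>j i. DS i ! e j i)" by (rule partL_PiE[OF p(1) e])
  have pR: "is_pattern (card ?S) (\<lambda>j i. RS i ! e j i)" using partL_PiE[OF p(2), of e] e unfolding SR by simp
  have mp: "hm DS RS y = rect_map (\<lambda>i. DS i ! e j i) (\<lambda>i. RS i ! e j i) y"
    if j: "j < card ?S" and y: "y \<in> rect (\<lambda>i. DS i ! e j i)" for j y
  proof (rule ext)
    fix i
    have "e j \<in> ?S" using e j unfolding bij_betw_def by auto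
    then have ji: "e j i < length (DS i)" by (auto simp: PiE_iff)
    have yi: "y i \<in> bcone (DS i ! e j i)" using y unfolding rect_bcone by blast
    show "hm DS RS y i = rect_map (\<lambda>i. DS i ! e j i) (\<lambda>i. RS i ! e j i) y i"
      unfolding hm_def rect_map_def using pm_eq[OF p(1) ji yi] by simp
  qed
  have "homeomorphic_map cantor_pow_top cantor_pow_top (hm DS RS)" by (rule hm_homeo[OF p])
  moreover have "\<exists>k D R. is_pattern k D \<and> is_pattern k R \<and>
               (\<forall>j<k. \<forall>y\<in>rect (D j). hm DS RS y = rect_map (D j) (R j) y)"
    by (intro exI[of _ "card ?S"] exI[of _ "\<lambda>j i. DS i ! e j i"] exI[of _ "\<lambda>j i. RS i ! e j i"] conjI pD pR allI impI ballI mp)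
  ultimately show ?thesis unfolding nV_def by blast
qed



lemma per_d:
  assumes per: "\<forall>k\<ge>Kp. s (k + p) = s (k::nat)" and dv: "int p dvd d"
  shows "\<forall>k\<ge>Kp + nat \<bar>d\<bar>. s (nat (int k + d)) = s k"
proof (intro allI impI)
  fix k assume k: "Kp + nat \<bar>d\<bar> \<le> k"
  obtain a where a: "d = int p * a" using dv by (elim dvdE)
  show "s (nat (int k + d)) = s k"
  proof (cases "0 \<le> a")
    case True
    have e: "nat (int k + d) = k + p * nat a" using True a by (simp add: nat_add_distrib nat_mult_distrib)
    show ?thesis unfolding e by (rule per_mult[OF per]) (use k in simp)
  next
    case False
    define m where "m = nat (int k + d)"
    have ab: "int (nat \<bar>d\<bar>) = \<bar>d\<bar>" by simp
    have "int k \<ge> \<bar>d\<bar>" using k ab by linarith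
    then have nn: "0 \<le> int k + d" by linarith
    then have mint: "int m = int k + d" unfolding m_def by simp
    have "int (m + p * nat (- a)) = int m + int p * (- a)" using False by simp
    also have "\<dots> = int k" using mint a by (simp add: algebra_simps)
    finally have km: "k = m + p * nat (- a)" by (simp only: of_nat_eq_iff)
    have mK: "Kp \<le> m" using mint k by linarith
    have e1: "s (nat (int k + d)) = s m" by (simp add: m_def)
    have "s (m + p * nat (- a)) = s m" by (rule per_mult[OF per mK])
    then have "s k = s m" using km by simp
    then show ?thesis using e1 by simp
  qed
qed

definition pre :: "cantor \<Rightarrow> nat \<Rightarrow> bool list" where
  "pre s n = map s [0..<n]"

lemma pre_len[simp]: "length (pre s n) = n" by (simp add: pre_def)

lemma bcone_pre: "y \<in> bcone (pre s n) \<longleftrightarrow> (\<forall>k<n. y k = s k)"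
  by (simp add: bcone_def pre_def)

lemma prepend_pre: "prepend (pre s n) z k = (if k < n then s k else z (k - n))"
  by (simp add: prepend_def pre_def)

definition constr :: "('n \<Rightarrow> cantor) \<Rightarrow> ('n \<Rightarrow> int) \<Rightarrow> bool" where
  "constr x d \<longleftrightarrow> (\<forall>i. \<not> rational_pt (x i) \<longrightarrow> d i = 0) \<and>
      (\<forall>i. rational_pt (x i) \<longrightarrow> int (minper (x i)) dvd d i)"

lemma realize:
  fixes x :: "'n::finite \<Rightarrow> cantor"
  assumes c: "constr x d"
  shows "\<exists>h\<in>nV. h x = x \<and> form x h d"
proof -
  have "\<forall>i. \<exists>K0. \<forall>k\<ge>K0. x i (nat (int k + d i)) = x i k"
  proof
    fix i
    show "\<exists>K0. \<forall>k\<ge>K0. x i (nat (int k + d i)) = x i k"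
    proof (cases "rational_pt (x i)")
      case True
      have ep: "eper (x i) (minper (x i))" by (rule minper_eper[OF True])
      then obtain Kp where Kp: "\<forall>k\<ge>Kp. x i (k + minper (x i)) = x i k" unfolding eper_def by blast
      have "int (minper (x i)) dvd d i" using c True unfolding constr_def by blast
      then show ?thesis using per_d[OF Kp] by blast
    next
      case False
      then have "d i = 0" using c unfolding constr_def by blast
      then show ?thesis by simp
    qed
  qed
  from choice[OF this] obtain K0 where K0: "\<And>i k. K0 i \<le> k \<Longrightarrow> x i (nat (int k + d i)) = x i k" by blast
  obtain B0 where B0: "\<And>i. K0 i + nat \<bar>d i\<bar> \<le> B0" using fin_bound[of "\<lambda>i. K0 i + nat \<bar>d i\<bar>"] by blast
  define B where "B = B0 + 1"
  have Bd: "0 < int B + d i" "int B \<ge> \<bar>d i\<bar> + 1" for i using B0[of i] unfolding B_def by linarith+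
  define Q1 where "Q1 = (\<lambda>i. pre (x i) (nat (int B + d i)))"
  define Q2 where "Q2 = (\<lambda>i. pre (x i) B)"
  have "\<forall>i. \<exists>DR. length (fst DR) = length (snd DR) \<and> partL (fst DR) \<and> partL (snd DR) \<and> fst DR \<noteq> [] \<and>
            fst DR ! 0 = Q1 i \<and> snd DR ! 0 = Q2 i"
  proof
    fix i
    have "Q1 i \<noteq> []" "Q2 i \<noteq> []" using Bd[of i] unfolding Q1_def Q2_def by (simp_all add: pre_def)
    from oneD[OF this] obtain Ds Rs where "length Ds = length Rs \<and> partL Ds \<and> partL Rs \<and> Ds \<noteq> [] \<and> Ds ! 0 = Q1 i \<and> Rs ! 0 = Q2 i"
      by blast
    then show "\<exists>DR. length (fst DR) = length (snd DR) \<and> partL (fst DR) \<and> partL (snd DR) \<and> fst DR \<noteq> [] \<and>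
            fst DR ! 0 = Q1 i \<and> snd DR ! 0 = Q2 i" by (intro exI[of _ "(Ds, Rs)"]) simp
  qed
  from choice[OF this] obtain DR where DR: "\<And>i. length (fst (DR i)) = length (snd (DR i)) \<and> partL (fst (DR i)) \<and> partL (snd (DR i)) \<and> fst (DR i) \<noteq> [] \<and>
            fst (DR i) ! 0 = Q1 i \<and> snd (DR i) ! 0 = Q2 i" by blast
  define DS where "DS = (\<lambda>i. fst (DR i))"
  define RS where "RS = (\<lambda>i. snd (DR i))"
  have pD: "partL (DS i)" for i using DR[of i] unfolding DS_def by blast
  have pR: "partL (RS i)" for i using DR[of i] unfolding RS_def by blast
  have lDR: "length (DS i) = length (RS i)" for i using DR[of i] unfolding DS_def RS_def by blast
  have ne: "0 < length (DS i)" for i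
  proof -
    have "DS i \<noteq> []" using DR[of i] unfolding DS_def by blast
    then show ?thesis by simp
  qed
  have D0: "DS i ! 0 = Q1 i" for i using DR[of i] unfolding DS_def by blast
  have R0: "RS i ! 0 = Q2 i" for i using DR[of i] unfolding RS_def by blast
  define h where "h = hm DS RS"
  have hV: "h \<in> nV" unfolding h_def by (rule hm_nV[OF pD pR lDR])
  define N where "N = B + B"
  have hy: "h y = Mk x (\<lambda>i. B) d y" if y: "y \<in> cyl N x" for y
  proof (intro ext)
    fix i k
    have n1: "nat (int B + d i) \<le> N" using Bd[of i] unfolding N_def by linarith
    have yi: "y i \<in> bcone (DS i ! 0)" unfolding D0 Q1_def bcone_pre using y n1 unfolding cyl_def by simp
    have "h y i = prepend (RS i ! 0) (\<lambda>k. y i (k + length (DS i ! 0)))"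
      unfolding h_def hm_def using pm_eq[OF pD ne yi] by simp
    then have "h y i k = (if k < B then x i k else y i (k - B + nat (int B + d i)))"
      unfolding R0 D0 Q1_def Q2_def prepend_pre by simp
    also have "\<dots> = Mk x (\<lambda>i. B) d y i k"
    proof (cases "k < B")
      case False
      have "k - B + nat (int B + d i) = nat (int k + d i)" using False Bd[of i] by linarith
      then show ?thesis using False by (simp add: Mk_def)
    qed (simp add: Mk_def)
    finally show "h y i k = Mk x (\<lambda>i. B) d y i k" .
  qed
  have perB: "x i (nat (int k + d i)) = x i k" if "B \<le> k" for i k
    using K0[of i k] B0[of i] that unfolding B_def by simp
  have hx: "h x = x"
  proof -
    have "x \<in> cyl N x" by (simp add: cyl_def)
    then have "h x = Mk x (\<lambda>i. B) d x" by (rule hy)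
    also have "\<dots> = x" by (auto simp: fun_eq_iff Mk_def perB)
    finally show ?thesis .
  qed
  have "form x h d" unfolding form_def
  proof (intro exI[of _ "\<lambda>i. B"] exI[of _ N] conjI allI impI ballI)
    fix i show "0 \<le> int B + d i" using Bd[of i] by simp
  next
    fix i k assume "B \<le> k" then show "x i (nat (int k + d i)) = x i k" by (rule perB)
  next
    fix y assume "y \<in> cyl N x" then show "h y = Mk x (\<lambda>i. B) d y" by (rule hy)
  qed
  then show ?thesis using hV hx by blast
qed

lemma form_constr:
  assumes f: "form x f d" shows "constr x d"
  unfolding constr_def
proof (intro conjI allI impI)
  fix i assume nr: "\<not> rational_pt (x i)"
  show "d i = 0"
  proof (rule ccontr)
    assume "d i \<noteq> 0"
    then have "eper (x i) (nat \<bar>d i\<bar>)" by (rule form_per[OF f])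
    then show False using nr rational_eper by blast
  qed
next
  fix i assume r: "rational_pt (x i)"
  show "int (minper (x i)) dvd d i"
  proof (cases "d i = 0")
    case False
    then have "eper (x i) (nat \<bar>d i\<bar>)" by (rule form_per[OF f])
    then have "minper (x i) dvd nat \<bar>d i\<bar>" by (rule minper_dvd)
    then have "int (minper (x i)) dvd int (nat \<bar>d i\<bar>)" by (simp only: of_nat_dvd_iff)
    then show ?thesis by simp
  qed simp
qed

lemma constr_add: "constr x d \<Longrightarrow> constr x e \<Longrightarrow> constr x (\<lambda>i. d i + e i)"
  unfolding constr_def by auto



definition dv :: "('n \<Rightarrow> cantor) \<Rightarrow> (('n \<Rightarrow> cantor) \<Rightarrow> ('n \<Rightarrow> cantor)) \<Rightarrow> ('n \<Rightarrow> int)" where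
  "dv x f = (SOME d. form x f d)"

lemma fix_form:
  fixes x :: "'n::finite \<Rightarrow> cantor"
  assumes "h \<in> Fix nV x" shows "form x h (dv x h)"
proof -
  have "\<exists>d. form x h d" using assms nV_form unfolding Fix_def by blast
  then show ?thesis unfolding dv_def by (rule someI_ex)
qed

lemma ge_refl: "germ_equiv cantor_pow_top x f f"
proof -
  have "openin cantor_pow_top (topspace cantor_pow_top)" by (rule openin_topspace)
  then have "openin cantor_pow_top UNIV" by simp
  then show ?thesis unfolding germ_equiv_def by blast
qed

lemma ge_sym: assumes "germ_equiv X x f g" shows "germ_equiv X x g f"
proof -
  obtain U where U: "openin X U" "x \<in> U" "\<forall>y\<in>U. f y = g y" using assms unfolding germ_equiv_def by blast
  have "\<forall>y\<in>U. g y = f y" using U(3) by simp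
  then show ?thesis unfolding germ_equiv_def using U(1,2) by blast
qed

lemma ge_trans: "germ_equiv X x f g \<Longrightarrow> germ_equiv X x g h \<Longrightarrow> germ_equiv X x f h"
proof -
  assume a: "germ_equiv X x f g" and b: "germ_equiv X x g h"
  obtain U where U: "openin X U" "x \<in> U" "\<forall>y\<in>U. f y = g y" using a unfolding germ_equiv_def by blast
  obtain V where V: "openin X V" "x \<in> V" "\<forall>y\<in>V. g y = h y" using b unfolding germ_equiv_def by blast
  have "openin X (U \<inter> V)" using U(1) V(1) by (rule openin_Int)
  moreover have "x \<in> U \<inter> V" using U(2) V(2) by blast
  moreover have "\<forall>y\<in>U \<inter> V. f y = h y" using U(3) V(3) by simp
  ultimately show ?thesis unfolding germ_equiv_def by blast
qed

lemma germ_eq_of_ge: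
  assumes "germ_equiv X x g h" shows "germ X K x g = germ X K x h"
proof -
  have "germ_equiv X x f g \<longleftrightarrow> germ_equiv X x f h" for f
  proof
    assume "germ_equiv X x f g" then show "germ_equiv X x f h" using assms by (rule ge_trans)
  next
    assume "germ_equiv X x f h" then show "germ_equiv X x f g" using ge_sym[OF assms] by (rule ge_trans)
  qed
  then show ?thesis unfolding germ_def by simp
qed

lemma germ_self: "h \<in> Fix K x \<Longrightarrow> h \<in> germ cantor_pow_top K x h"
  unfolding germ_def using ge_refl by blast

definition rep :: "('a \<Rightarrow> 'a) set \<Rightarrow> ('a \<Rightarrow> 'a)" where
  "rep A = (SOME f. f \<in> A)"

lemma rep_in: assumes "f \<in> A" shows "rep A \<in> A"
  unfolding rep_def using assms by (rule someI[of "\<lambda>f. f \<in> A"])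

lemma carrier_rep:
  fixes x :: "'n::finite \<Rightarrow> cantor"
  assumes "A \<in> carrier (germ_group cantor_pow_top nV x)"
  shows "rep A \<in> Fix nV x \<and> A = germ cantor_pow_top nV x (rep A) \<and> form x (rep A) (dv x (rep A))"
proof -
  have "A \<in> germ cantor_pow_top nV x ` Fix nV x" using assms by (simp add: germ_group_def)
  then obtain f where f: "f \<in> Fix nV x" "A = germ cantor_pow_top nV x f" by blast
  have "f \<in> A" using germ_self[OF f(1)] f(2) by simp
  then have ra: "rep A \<in> A" by (rule rep_in)
  then have r1: "rep A \<in> Fix nV x" and r2: "germ_equiv cantor_pow_top x (rep A) f" using f(2) unfolding germ_def by auto
  have "A = germ cantor_pow_top nV x (rep A)" using f(2) germ_eq_of_ge[OF r2] by simp
  then show ?thesis using r1 fix_form[OF r1] by blast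
qed

lemma mult_germ:
  "A \<otimes>\<^bsub>germ_group X K x\<^esub> B = germ X K x (rep A \<circ> rep B)"
  unfolding germ_group_def rep_def by simp

lemma carrier_germ: "h \<in> Fix K x \<Longrightarrow> germ X K x h \<in> carrier (germ_group X K x)"
  unfolding germ_group_def by simp

lemma mult_dv:
  fixes x :: "'n::finite \<Rightarrow> cantor"
  assumes A: "A \<in> carrier (germ_group cantor_pow_top nV x)" and B: "B \<in> carrier (germ_group cantor_pow_top nV x)"
  shows "form x (rep (A \<otimes>\<^bsub>germ_group cantor_pow_top nV x\<^esub> B)) (\<lambda>i. dv x (rep A) i + dv x (rep B) i)"
proof -
  let ?a = "rep A" and ?b = "rep B"
  have a: "form x ?a (dv x ?a)" and b: "form x ?b (dv x ?b)" using carrier_rep[OF A] carrier_rep[OF B] by blast+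
  have ab: "form x (?a \<circ> ?b) (\<lambda>i. dv x ?a i + dv x ?b i)" by (rule form_comp[OF a b])
  have "constr x (\<lambda>i. dv x ?a i + dv x ?b i)" by (rule constr_add[OF form_constr[OF a] form_constr[OF b]])
  then obtain h where h: "h \<in> nV" "h x = x" "form x h (\<lambda>i. dv x ?a i + dv x ?b i)" using realize by blast
  have hF: "h \<in> Fix nV x" using h unfolding Fix_def by blast
  have "germ_equiv cantor_pow_top x h (?a \<circ> ?b)" by (rule form_germ[OF h(3) ab])
  then have "h \<in> germ cantor_pow_top nV x (?a \<circ> ?b)" using hF unfolding germ_def by blast
  then have c: "rep (germ cantor_pow_top nV x (?a \<circ> ?b)) \<in> germ cantor_pow_top nV x (?a \<circ> ?b)" by (rule rep_in)
  let ?c = "rep (germ cantor_pow_top nV x (?a \<circ> ?b))"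
  have cF: "?c \<in> Fix nV x" and cg: "germ_equiv cantor_pow_top x ?c (?a \<circ> ?b)" using c unfolding germ_def by auto
  have "dv x ?c = (\<lambda>i. dv x ?a i + dv x ?b i)" by (rule form_unique[OF fix_form[OF cF] ab cg])
  then have "form x ?c (\<lambda>i. dv x ?a i + dv x ?b i)" using fix_form[OF cF] by simp
  then show ?thesis unfolding mult_germ .
qed

theorem mainTheorem3:
  fixes x :: "'n::finite \<Rightarrow> cantor"
  shows "germ_group cantor_pow_top nV x \<cong>
           product_group {..<card {i. rational_pt (x i)}} (\<lambda>_. integer_group)"
proof -
  let ?G = "germ_group cantor_pow_top nV x"
  let ?S = "{i. rational_pt (x i)}"
  let ?m = "card ?S"
  let ?H = "product_group {..<?m} (\<lambda>_. integer_group)"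
  have finS: "finite ?S" by simp
  obtain r where r: "bij_betw r {0..<?m} ?S" using ex_bij_betw_nat_finite[OF finS] by blast
  have rimg: "r ` {..<?m} = ?S" using r unfolding bij_betw_def atLeast0LessThan by blast
  have rinj: "inj_on r {..<?m}" using r unfolding bij_betw_def atLeast0LessThan by blast
  define p where "p = (\<lambda>i. int (minper (x i)))"
  have rrat: "rational_pt (x (r j))" if "j < ?m" for j using rimg that by blast
  have ppos: "0 < p (r j)" if "j < ?m" for j unfolding p_def using minper_pos[OF rrat[OF that]] by simp
  have pdv: "p (r j) dvd d (r j)" if "j < ?m" "constr x d" for j d
    using that rrat[OF that(1)] unfolding constr_def p_def by blast
  define \<phi> where "\<phi> = (\<lambda>A. \<lambda>j\<in>{..<?m}. dv x (rep A) (r j) div p (r j))"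
  have cH: "carrier ?H = Pi\<^sub>E {..<?m} (\<lambda>_. UNIV)" by (simp add: integer_group_def)
  have mH: "a \<otimes>\<^bsub>?H\<^esub> b = (\<lambda>j\<in>{..<?m}. a j + b j)" for a b by (simp add: integer_group_def)
  have hom: "\<phi> \<in> hom ?G ?H"
    unfolding hom_def
  proof (intro CollectI conjI ballI funcsetI)
    fix A assume "A \<in> carrier ?G"
    show "\<phi> A \<in> carrier ?H" unfolding cH \<phi>_def by simp
  next
    fix A B assume A: "A \<in> carrier ?G" and B: "B \<in> carrier ?G"
    let ?d = "dv x (rep A)" and ?e = "dv x (rep B)"
    have fA: "form x (rep A) ?d" and fB: "form x (rep B) ?e" using carrier_rep[OF A] carrier_rep[OF B] by blast+
    have cA: "constr x ?d" and cB: "constr x ?e" using form_constr fA fB by blast+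
    have AB: "form x (rep (A \<otimes>\<^bsub>?G\<^esub> B)) (\<lambda>i. ?d i + ?e i)" by (rule mult_dv[OF A B])
    have ABc: "rep (A \<otimes>\<^bsub>?G\<^esub> B) \<in> Fix nV x"
      unfolding mult_germ
    proof -
      have "form x (rep A \<circ> rep B) (\<lambda>i. ?d i + ?e i)" by (rule form_comp[OF fA fB])
      have "rep (A \<otimes>\<^bsub>?G\<^esub> B) \<in> A \<otimes>\<^bsub>?G\<^esub> B"
      proof -
        have "constr x (\<lambda>i. ?d i + ?e i)" by (rule constr_add[OF cA cB])
        then obtain h where h: "h \<in> nV" "h x = x" "form x h (\<lambda>i. ?d i + ?e i)" using realize by blast
        have hF: "h \<in> Fix nV x" using h unfolding Fix_def by blast
        have "germ_equiv cantor_pow_top x h (rep A \<circ> rep B)"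
          by (rule form_germ[OF h(3) \<open>form x (rep A \<circ> rep B) (\<lambda>i. ?d i + ?e i)\<close>])
        then have "h \<in> A \<otimes>\<^bsub>?G\<^esub> B" using hF unfolding mult_germ germ_def by blast
        then show ?thesis by (rule rep_in)
      qed
      then show "rep (germ cantor_pow_top nV x (rep A \<circ> rep B)) \<in> Fix nV x" unfolding mult_germ germ_def by blast
    qed
    have dAB: "dv x (rep (A \<otimes>\<^bsub>?G\<^esub> B)) = (\<lambda>i. ?d i + ?e i)"
      using form_unique[OF fix_form[OF ABc] AB] ge_refl by blast
    show "\<phi> (A \<otimes>\<^bsub>?G\<^esub> B) = \<phi> A \<otimes>\<^bsub>?H\<^esub> \<phi> B"
      unfolding mH
    proof (rule ext)
      fix j
      show "\<phi> (A \<otimes>\<^bsub>?G\<^esub> B) j = (\<lambda>j\<in>{..<?m}. \<phi> A j + \<phi> B j) j"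
      proof (cases "j < ?m")
        case True
        have "(?d (r j) + ?e (r j)) div p (r j) = ?d (r j) div p (r j) + ?e (r j) div p (r j)"
          by (rule div_plus_div_distrib_dvd_left[OF pdv[OF True cA]])
        then show ?thesis using True unfolding \<phi>_def dAB by simp
      qed (simp add: \<phi>_def)
    qed
  qed
  have inj: "inj_on \<phi> (carrier ?G)"
  proof (rule inj_onI)
    fix A B assume A: "A \<in> carrier ?G" and B: "B \<in> carrier ?G" and eq: "\<phi> A = \<phi> B"
    let ?d = "dv x (rep A)" and ?e = "dv x (rep B)"
    have fA: "form x (rep A) ?d" and fB: "form x (rep B) ?e" using carrier_rep[OF A] carrier_rep[OF B] by blast+
    have cA: "constr x ?d" and cB: "constr x ?e" using form_constr fA fB by blast+
    have "?d i = ?e i" for i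
    proof (cases "rational_pt (x i)")
      case True
      then have "i \<in> r ` {..<?m}" using rimg by simp
      then obtain j where j0: "j \<in> {..<?m}" "i = r j" by blast
      then have j: "j < ?m" "i = r j" by simp_all
      have "\<phi> A j = \<phi> B j" using eq by simp
      then have "?d (r j) div p (r j) = ?e (r j) div p (r j)" using j(1) unfolding \<phi>_def by simp
      then have "p (r j) * (?d (r j) div p (r j)) = p (r j) * (?e (r j) div p (r j))" by simp
      then have "?d (r j) = ?e (r j)" using pdv[OF j(1) cA] pdv[OF j(1) cB] by simp
      then show ?thesis using j(2) by simp
    next
      case False
      then show ?thesis using cA cB unfolding constr_def by simp
    qed
    then have "?d = ?e" by (rule ext)
    then have fB': "form x (rep B) ?d" using fB by simp
    have "germ_equiv cantor_pow_top x (rep A) (rep B)" by (rule form_germ[OF fA fB'])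
    then have "germ cantor_pow_top nV x (rep A) = germ cantor_pow_top nV x (rep B)" by (rule germ_eq_of_ge)
    moreover have "A = germ cantor_pow_top nV x (rep A)" using carrier_rep[OF A] by blast
    moreover have "B = germ cantor_pow_top nV x (rep B)" using carrier_rep[OF B] by blast
    ultimately show "A = B" by simp
  qed
  have surj: "\<phi> ` carrier ?G = carrier ?H"
  proof
    have "\<phi> \<in> carrier ?G \<rightarrow> carrier ?H" using hom unfolding hom_def mem_Collect_eq by (rule conjunct1)
    then show "\<phi> ` carrier ?G \<subseteq> carrier ?H" by (rule funcset_image)
  next
    show "carrier ?H \<subseteq> \<phi> ` carrier ?G"
    proof
      fix v assume v: "v \<in> carrier ?H"
      define d where "d = (\<lambda>i. if rational_pt (x i) then v (inv_into {..<?m} r i) * p i else 0)"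
      have cd: "constr x d" unfolding constr_def d_def p_def by simp
      obtain h where h: "h \<in> nV" "h x = x" "form x h d" using realize[OF cd] by blast
      have hF: "h \<in> Fix nV x" using h unfolding Fix_def by blast
      let ?A = "germ cantor_pow_top nV x h"
      have A: "?A \<in> carrier ?G" by (rule carrier_germ[OF hF])
      have ra: "rep ?A \<in> ?A" by (rule rep_in[OF germ_self[OF hF]])
      then have raF: "rep ?A \<in> Fix nV x" and rag: "germ_equiv cantor_pow_top x (rep ?A) h" unfolding germ_def by auto
      have dA: "dv x (rep ?A) = d" by (rule form_unique[OF fix_form[OF raF] h(3) rag])
      have "\<phi> ?A = v"
      proof (rule ext)
        fix j
        show "\<phi> ?A j = v j"
        proof (cases "j < ?m")
          case True
          have jm: "j \<in> {..<?m}" using True by simp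
          have ij: "inv_into {..<?m} r (r j) = j" by (rule inv_into_f_f[OF rinj jm])
          have drj: "d (r j) = v j * p (r j)" unfolding d_def using rrat[OF True] ij by simp
          have "\<phi> ?A j = dv x (rep ?A) (r j) div p (r j)" using jm unfolding \<phi>_def by (rule restrict_apply')
          also have "\<dots> = (v j * p (r j)) div p (r j)" unfolding dA drj ..
          also have "\<dots> = v j" using ppos[OF True] by simp
          finally show ?thesis .
        next
          case False
          have v': "v \<in> Pi\<^sub>E {..<?m} (\<lambda>_. UNIV)" using v unfolding cH .
          have "j \<notin> {..<?m}" using False by simp
          then have "v j = undefined" by (rule PiE_arb[OF v'])
          then show ?thesis using False unfolding \<phi>_def by simp
        qed
      qed
      then show "v \<in> \<phi> ` carrier ?G" using A by blast
    qed
  qed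
  have "\<phi> \<in> iso ?G ?H" unfolding iso_iff using hom inj surj by blast
  then show ?thesis by (rule is_isoI)
qed


end
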